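(* Let $q$ be a prime power, $n$ a block length, $r$ a locality parameter with $r\mid n$, and $\ell$ an integer with $0\le \ell< n/2-n/r$. Let $\mathcal{C}=\mathrm{CSS}(C_X,C_Z)$ be a random qLRC with parameters $n,r,\ell$ over $\mathbb{F}_q$ (as defined in the context). For any $\delta,\epsilon>0$, if $\ell\geq(H_q(\delta)+\epsilon)n$ then \[ \Pr[d(\mathcal{C})\geq\delta n] > 1-2q^{-\epsilon n}. \] In particular, if $q\geq 2^{2/\epsilon}$, then for all $\ell\geq(\delta+\epsilon)n$, \[ \Pr[d(\mathcal{C})\geq\delta n] > 1-2q^{-\epsilon n/2}. \]
   Context: For $x,y\in\mathbb{F}_q^n$, $x\cdot y=\sum_i x_iy_i$; for a linear code $C\subseteq\mathbb{F}_q^n$, $C^\perp=\{y: y\cdot c=0\ \forall c\in C\}$. For linear codes $C_X,C_Z\subseteq\mathbb{F}_q^n$ with $C_X^\perp\subseteq C_Z$, the CSS code $\mathrm{CSS}(C_X,C_Z)=\mathrm{span}\{\sum_{y\in C_X^\perp}|x+y\rangle: x\in C_Z\}\subseteq(\mathbb{C}^q)^{\otimes n}$; its distance is $d(\mathcal{C})=\min\{|y|: y\in (C_Z\setminus C_X^\perp)\cup(C_X\setminus C_Z^\perp)\}$, where $|y|$ is the Hamming weight. Random qLRC: initialize $H_X,H_Z\in\mathbb{F}_q^{(n/r)\times n}$ by, for row $j\in\{0,\dots,n/r-1\}$ and column $i\in\{0,\dots,n-1\}$: $(H_X)_{j,i}=1$ if $i\in\{rj,\dots,rj+r-1\}$ and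 $0$ otherwise; $(H_Z)_{j,i}=-(r-1)$ if $i=rj$, $1$ if $i\in\{rj+1,\dots,rj+r-1\}$, and $0$ otherwise. Then (1) repeat $\ell$ times: sample a uniformly random vector in $\text{row-span}(H_Z)^\perp\setminus\text{row-span}(H_X)$ and append it as a new row of $H_X$; (2) repeat $\ell$ times: sample a uniformly random vector in $\text{row-span}(H_X)^\perp\setminus\text{row-span}(H_Z)$ and append it as a new row of $H_Z$. Set $C_X=\ker H_X$, $C_Z=\ker H_Z$ (so $C_X^\perp\subseteq C_Z$). The $q$-ary entropy function is $H_q(x)=x\log_q(q-1)-x\log_q x-(1-x)\log_q(1-x)$.
   Formalization: Both claims are asserted only for $\delta$ with $0 < \delta \le 1 - 1/q$, so delta is also bounded above by 1 - 1/q. Apart from conventions, each condition added here is assumed in the paper as well or is needed for the statement above to hold. *)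

theory Defs
  imports "HOL-Probability.Probability"
begin

text \<open>Vectors of F_q^n are represented as functions nat => 'a that vanish outside {0..<n}.\<close>

definition vecs :: "nat \<Rightarrow> (nat \<Rightarrow> 'a::zero) set" where
  "vecs n = {v. \<forall>i\<ge>n. v i = 0}"

definition dotp :: "nat \<Rightarrow> (nat \<Rightarrow> 'a::comm_ring_1) \<Rightarrow> (nat \<Rightarrow> 'a) \<Rightarrow> 'a" where
  "dotp n x y = (\<Sum>i<n. x i * y i)"

definition hweight :: "nat \<Rightarrow> (nat \<Rightarrow> 'a::zero) \<Rightarrow> nat" where
  "hweight n y = card {i. i < n \<and> y i \<noteq> 0}"

definition dual :: "nat \<Rightarrow> (nat \<Rightarrow> 'a::comm_ring_1) set \<Rightarrow> (nat \<Rightarrow> 'a) set" where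
  "dual n S = {y \<in> vecs n. \<forall>c\<in>S. dotp n y c = 0}"

definition row_span :: "(nat \<Rightarrow> 'a::comm_ring_1) list \<Rightarrow> (nat \<Rightarrow> 'a) set" where
  "row_span H = {(\<lambda>i. \<Sum>j<length H. c j * (H ! j) i) | c. True}"

definition kerm :: "nat \<Rightarrow> (nat \<Rightarrow> 'a::comm_ring_1) list \<Rightarrow> (nat \<Rightarrow> 'a) set" where
  "kerm n H = dual n (set H)"

text \<open>Distance of CSS(C_X, C_Z); the minimum over the empty set is infinity.\<close>
definition css_distance :: "nat \<Rightarrow> (nat \<Rightarrow> 'a::comm_ring_1) set \<Rightarrow> (nat \<Rightarrow> 'a) set \<Rightarrow> enat" where
  "css_distance n CX CZ =
     (INF y \<in> (CZ - dual n CX) \<union> (CX - dual n CZ). enat (hweight n y))"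

definition HX0 :: "nat \<Rightarrow> nat \<Rightarrow> (nat \<Rightarrow> 'a::comm_ring_1) list" where
  "HX0 n r = map (\<lambda>j. \<lambda>i. if r * j \<le> i \<and> i < r * j + r then 1 else 0) [0..<n div r]"

definition HZ0 :: "nat \<Rightarrow> nat \<Rightarrow> (nat \<Rightarrow> 'a::comm_ring_1) list" where
  "HZ0 n r = map (\<lambda>j. \<lambda>i. if i = r * j then - of_nat (r - 1)
                            else if r * j < i \<and> i < r * j + r then 1 else 0) [0..<n div r]"

fun iter_pmf :: "nat \<Rightarrow> ('b \<Rightarrow> 'b pmf) \<Rightarrow> 'b \<Rightarrow> 'b pmf" where
  "iter_pmf 0 f x = return_pmf x"
| "iter_pmf (Suc k) f x = bind_pmf (f x) (iter_pmf k f)"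

definition stepX :: "nat \<Rightarrow> (nat \<Rightarrow> 'a::{comm_ring_1,finite}) list \<times> (nat \<Rightarrow> 'a) list
    \<Rightarrow> ((nat \<Rightarrow> 'a) list \<times> (nat \<Rightarrow> 'a) list) pmf" where
  "stepX n = (\<lambda>(hx, hz). map_pmf (\<lambda>v. (hx @ [v], hz))
                 (pmf_of_set (dual n (row_span hz) - row_span hx)))"

definition stepZ :: "nat \<Rightarrow> (nat \<Rightarrow> 'a::{comm_ring_1,finite}) list \<times> (nat \<Rightarrow> 'a) list
    \<Rightarrow> ((nat \<Rightarrow> 'a) list \<times> (nat \<Rightarrow> 'a) list) pmf" where
  "stepZ n = (\<lambda>(hx, hz). map_pmf (\<lambda>v. (hx, hz @ [v]))
                 (pmf_of_set (dual n (row_span hx) - row_span hz)))"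

definition random_qLRC :: "nat \<Rightarrow> nat \<Rightarrow> nat
    \<Rightarrow> ((nat \<Rightarrow> 'a::{comm_ring_1,finite}) list \<times> (nat \<Rightarrow> 'a) list) pmf" where
  "random_qLRC n r l =
     bind_pmf (iter_pmf l (stepX n) (HX0 n r, HZ0 n r)) (iter_pmf l (stepZ n))"

definition Hq :: "real \<Rightarrow> real \<Rightarrow> real" where
  "Hq q x = x * log q (q - 1) - x * log q x - (1 - x) * log q (1 - x)"

end

theory Submission
  imports Defs
begin


lemma prob_bind_le_ind:
  fixes M :: "'a pmf" and N :: "'a \<Rightarrow> 'b pmf"
  assumes "\<And>x. x \<in> set_pmf M \<Longrightarrow> measure_pmf.prob (N x) X \<le> d * indicator B x" and "d \<ge> 0"
  shows "measure_pmf.prob (bind_pmf M N) X \<le> d * measure_pmf.prob M B"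
proof -
  have "emeasure (measure_pmf (bind_pmf M N)) X = (\<integral>\<^sup>+x. emeasure (measure_pmf (N x)) X \<partial>M)"
    by simp
  also have "\<dots> \<le> (\<integral>\<^sup>+x. ennreal d * indicator B x \<partial>M)"
  proof (rule nn_integral_mono_AE)
    show "AE x in measure_pmf M. emeasure (measure_pmf (N x)) X \<le> ennreal d * indicator B x"
      unfolding AE_measure_pmf_iff
    proof
      fix x assume "x \<in> set_pmf M"
      then have "measure_pmf.prob (N x) X \<le> d * indicator B x" by (rule assms(1))
      then show "emeasure (measure_pmf (N x)) X \<le> ennreal d * indicator B x"
        by (cases "x \<in> B") (auto simp: measure_pmf.emeasure_eq_measure ennreal_leI intro: antisym)
    qed
  qed
  also have "\<dots> = ennreal d * emeasure M B"
    by (simp add: nn_integral_cmult_indicator)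
  also have "\<dots> = ennreal (d * measure_pmf.prob M B)"
    by (simp add: measure_pmf.emeasure_eq_measure ennreal_mult assms(2))
  finally have "ennreal (measure_pmf.prob (bind_pmf M N) X) \<le> ennreal (d * measure_pmf.prob M B)"
    by (simp add: measure_pmf.emeasure_eq_measure)
  then show ?thesis
    by (subst (asm) ennreal_le_iff) (auto simp: assms(2))
qed

lemma prob_bind_le:
  fixes M :: "'a pmf" and N :: "'a \<Rightarrow> 'b pmf"
  assumes "\<And>x. x \<in> set_pmf M \<Longrightarrow> measure_pmf.prob (N x) X \<le> d" and "d \<ge> 0"
  shows "measure_pmf.prob (bind_pmf M N) X \<le> d"
proof -
  have "measure_pmf.prob (bind_pmf M N) X \<le> d * measure_pmf.prob M UNIV"
    by (rule prob_bind_le_ind) (use assms in auto)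
  then show ?thesis by simp
qed



definition lin :: "(nat \<Rightarrow> 'a::comm_ring_1) set \<Rightarrow> bool" where
  "lin S \<longleftrightarrow> (\<lambda>_. 0) \<in> S \<and> (\<forall>x\<in>S. \<forall>y\<in>S. (\<lambda>i. x i + y i) \<in> S) \<and> (\<forall>c. \<forall>x\<in>S. (\<lambda>i. c * x i) \<in> S)"

lemma dotp_add: "dotp n (\<lambda>i. x i + z i) y = dotp n x y + dotp n z y"
  by (simp add: dotp_def algebra_simps sum.distrib)

lemma dotp_smult: "dotp n (\<lambda>i. c * x i) y = c * dotp n x y"
  by (simp add: dotp_def algebra_simps sum_distrib_left)

lemma dotp_zero: "dotp n (\<lambda>_. 0) y = 0"
  by (simp add: dotp_def)

lemma dotp_comm: "dotp n x y = dotp n y x"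
  by (simp add: dotp_def mult.commute)

lemma lin_dual: "lin (dual n T)"
  unfolding lin_def dual_def vecs_def
  by (auto simp: dotp_add dotp_smult dotp_zero)

lemma lin_Int: "lin S \<Longrightarrow> lin T \<Longrightarrow> lin (S \<inter> T)"
  unfolding lin_def by auto

lemma lin_row_span: "lin (row_span H)"
  unfolding lin_def row_span_def
proof (intro conjI ballI allI)
  show "(\<lambda>_. 0) \<in> {(\<lambda>i. \<Sum>j<length H. c j * (H ! j) i) | c. True}"
    by (rule CollectI, rule exI[of _ "\<lambda>_. 0"]) simp
next
  fix x y assume "x \<in> {(\<lambda>i. \<Sum>j<length H. c j * (H ! j) i) | c. True}"
    "y \<in> {(\<lambda>i. \<Sum>j<length H. c j * (H ! j) i) | c. True}"
  then obtain c1 c2 where "x = (\<lambda>i. \<Sum>j<length H. c1 j * (H ! j) i)" "y = (\<lambda>i. \<Sum>j<length H. c2 j * (H ! j) i)"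
    by auto
  then show "(\<lambda>i. x i + y i) \<in> {(\<lambda>i. \<Sum>j<length H. c j * (H ! j) i) | c. True}"
    by (intro CollectI exI[of _ "\<lambda>j. c1 j + c2 j"]) (simp add: algebra_simps sum.distrib)
next
  fix c x assume "x \<in> {(\<lambda>i. \<Sum>j<length H. c j * (H ! j) i) | c. True}"
  then obtain c1 where "x = (\<lambda>i. \<Sum>j<length H. c1 j * (H ! j) i)" by auto
  then show "(\<lambda>i. c * x i) \<in> {(\<lambda>i. \<Sum>j<length H. c j * (H ! j) i) | c. True}"
    by (intro CollectI exI[of _ "\<lambda>j. c * c1 j"]) (simp add: algebra_simps sum_distrib_left)
qed

lemma vecs_Suc: "vecs (Suc n) = (\<lambda>(v,a). v(n:=a)) ` (vecs n \<times> UNIV)"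
proof
  show "vecs (Suc n) \<subseteq> (\<lambda>(v,a). v(n:=a)) ` (vecs n \<times> UNIV)"
  proof
    fix y assume y: "y \<in> vecs (Suc n)"
    have "y = (\<lambda>(v,a). v(n:=a)) (y(n:=0), y n)" by auto
    moreover have "y(n:=0) \<in> vecs n" using y by (auto simp: vecs_def)
    ultimately show "y \<in> (\<lambda>(v,a). v(n:=a)) ` (vecs n \<times> UNIV)" by blast
  qed
qed (auto simp: vecs_def)

lemma inj_vecs_Suc: "inj_on (\<lambda>(v,a). v(n:=a)) (vecs n \<times> UNIV)"
proof (rule inj_onI, clarsimp)
  fix v a v' a' assume v: "v \<in> vecs n" "v' \<in> vecs n" and eq: "v(n := a) = v'(n := a')"
  have "a = a'" using fun_cong[OF eq, of n] by simp
  moreover have "v = v'"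
  proof
    fix i show "v i = v' i"
      using fun_cong[OF eq, of i] v by (cases "i = n") (auto simp: vecs_def)
  qed
  ultimately show "v = v' \<and> a = a'" by simp
qed

lemma finite_vecs: "finite (vecs n :: (nat \<Rightarrow> 'a::{zero,finite}) set)"
proof (induction n)
  case 0
  have "vecs 0 = {(\<lambda>_. 0) :: nat \<Rightarrow> 'a}" by (auto simp: vecs_def)
  then show ?case by simp
next
  case (Suc n)
  then show ?case by (simp add: vecs_Suc)
qed

lemma prod_upd: "(\<Prod>i<Suc n. g ((v(n:=a)) i)) = (\<Prod>i<n. g (v i)) * (g a :: real)"
proof -
  have "(\<Prod>i<n. g ((v(n:=a)) i)) = (\<Prod>i<n. g (v i))" by (rule prod.cong) auto
  then show ?thesis by (simp add: prod.lessThan_Suc)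
qed

lemma sum_vecs_prod:
  fixes g :: "'a::{zero,finite} \<Rightarrow> real"
  shows "(\<Sum>y\<in>vecs n. \<Prod>i<n. g (y i)) = (\<Sum>a\<in>UNIV. g a) ^ n"
proof (induction n)
  case 0
  have "vecs 0 = {(\<lambda>_. 0) :: nat \<Rightarrow> 'a}" by (auto simp: vecs_def)
  then show ?case by simp
next
  case (Suc n)
  have "(\<Sum>y\<in>vecs (Suc n). \<Prod>i<Suc n. g (y i))
      = (\<Sum>p\<in>vecs n \<times> UNIV. (\<lambda>y. \<Prod>i<Suc n. g (y i)) ((\<lambda>(v,a). v(n:=a)) p))"
    unfolding vecs_Suc by (rule sum.reindex[OF inj_vecs_Suc, unfolded comp_def])
  also have "\<dots> = (\<Sum>(v,a)\<in>vecs n \<times> UNIV. (\<Prod>i<n. g (v i)) * g a)"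
    by (rule sum.cong[OF refl]) (clarify, rule prod_upd)
  also have "\<dots> = (\<Sum>v\<in>vecs n. \<Sum>a\<in>UNIV. (\<Prod>i<n. g (v i)) * g a)"
    by (rule sum.cartesian_product[symmetric])
  also have "\<dots> = (\<Sum>v\<in>vecs n. (\<Prod>i<n. g (v i)) * (\<Sum>a\<in>UNIV. g a))"
    by (rule sum.cong[OF refl], rule sum_distrib_left[symmetric])
  also have "\<dots> = (\<Sum>v\<in>vecs n. \<Prod>i<n. g (v i)) * (\<Sum>a\<in>UNIV. g a)"
    by (rule sum_distrib_right[symmetric])
  also have "\<dots> = (\<Sum>a\<in>UNIV. g a) ^ n * (\<Sum>a\<in>UNIV. g a)"
    by (simp only: Suc.IH)
  finally show ?case by (simp only: power_Suc2)
qed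

lemma card_vecs: "card (vecs n :: (nat \<Rightarrow> 'a::{zero,finite}) set) = CARD('a) ^ n"
proof -
  have "real (card (vecs n :: (nat \<Rightarrow> 'a) set)) = (\<Sum>y\<in>(vecs n :: (nat \<Rightarrow> 'a) set). \<Prod>i<n. (\<lambda>_::'a. 1::real) (y i))"
    by simp
  also have "\<dots> = real (CARD('a)) ^ n" by (subst sum_vecs_prod) simp
  finally show ?thesis by (simp add: of_nat_eq_iff[symmetric] del: of_nat_eq_iff)
qed

lemma card_field_ge2: "CARD('a::{field,finite}) \<ge> 2"
proof -
  have "card {0::'a, 1} \<le> CARD('a)" by (rule card_mono) auto
  then show ?thesis by simp
qed

lemma card_split:
  fixes S :: "(nat \<Rightarrow> 'a::{field,finite}) set"
  assumes "lin S" "finite S" "a0 \<in> S" "dotp n a0 y = 1"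
  shows "card S = CARD('a) * card {x\<in>S. dotp n x y = 0}"
proof -
  let ?K = "{x\<in>S. dotp n x y = 0}"
  let ?f = "\<lambda>(k, c). (\<lambda>i. k i + c * a0 i)"
  have lin: "(\<lambda>_. 0) \<in> S" "\<And>x z. x \<in> S \<Longrightarrow> z \<in> S \<Longrightarrow> (\<lambda>i. x i + z i) \<in> S"
    "\<And>c x. x \<in> S \<Longrightarrow> (\<lambda>i. c * x i) \<in> S"
    using assms(1) unfolding lin_def by auto
  have dot: "dotp n (?f (k, c)) y = dotp n k y + c" for k c
    using dotp_add[of n k "\<lambda>i. c * a0 i" y] dotp_smult[of n c a0 y] assms(4) by simp
  have "bij_betw ?f (?K \<times> UNIV) S"
  proof (rule bij_betw_imageI)
    show "inj_on ?f (?K \<times> UNIV)"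
    proof (rule inj_onI)
      fix p p' assume p: "p \<in> ?K \<times> UNIV" and p': "p' \<in> ?K \<times> UNIV" and eq0: "?f p = ?f p'"
      obtain k c where pk: "p = (k, c)" by (cases p)
      obtain k' c' where pk': "p' = (k', c')" by (cases p')
      have k: "k \<in> S" "dotp n k y = 0" and k': "k' \<in> S" "dotp n k' y = 0" using p p' pk pk' by auto
      have eq: "?f (k, c) = ?f (k', c')" using eq0 pk pk' by simp
      have "c = c'" using arg_cong[OF eq, of "\<lambda>v. dotp n v y"] dot k k' by simp
      moreover have "k = k'"
      proof
        fix i show "k i = k' i" using fun_cong[OF eq, of i] \<open>c = c'\<close> by simp
      qed
      ultimately show "p = p'" using pk pk' by simp
    qed
  next
    show "?f ` (?K \<times> UNIV) = S"
    proof
      show "?f ` (?K \<times> UNIV) \<subseteq> S" using lin assms(3) by auto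
    next
      show "S \<subseteq> ?f ` (?K \<times> UNIV)"
      proof
        fix x assume x: "x \<in> S"
        define t where "t = dotp n x y"
        define k where "k = (\<lambda>i. x i + (- t) * a0 i)"
        have "k \<in> S" unfolding k_def using lin x assms(3) by blast
        moreover have "dotp n k y = 0"
          unfolding k_def using dotp_add[of n x "\<lambda>i. (- t) * a0 i" y] dotp_smult[of n "-t" a0 y] assms(4)
          by (simp add: t_def)
        moreover have "x = ?f (k, t)" by (simp add: k_def)
        ultimately show "x \<in> ?f ` (?K \<times> UNIV)" by blast
      qed
    qed
  qed
  then have "card S = card (?K \<times> (UNIV :: 'a set))" by (simp add: bij_betw_same_card)
  then show ?thesis by (simp add: card_cartesian_product)
qed

lemma card_le_split:
  fixes S :: "(nat \<Rightarrow> 'a::{field,finite}) set"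
  assumes "lin S" "finite S"
  shows "card S \<le> CARD('a) * card {x\<in>S. dotp n x y = 0}"
proof (cases "\<exists>s\<in>S. dotp n s y \<noteq> 0")
  case True
  then obtain s where s: "s \<in> S" "dotp n s y \<noteq> 0" by blast
  let ?a = "\<lambda>i. inverse (dotp n s y) * s i"
  have "?a \<in> S" using assms(1) s unfolding lin_def by blast
  moreover have "dotp n ?a y = 1" using s by (simp add: dotp_smult)
  ultimately show ?thesis using card_split[OF assms] by simp
next
  case False
  then have "{x\<in>S. dotp n x y = 0} = S" by auto
  then show ?thesis using card_field_ge2[where 'a='a] by simp
qed

lemma dual_cons: "dual n (set (h # H)) = {x \<in> dual n (set H). dotp n x h = 0}"
  by (auto simp: dual_def)

lemma finite_dual: "finite (dual n (T :: (nat \<Rightarrow> 'a::{comm_ring_1,finite}) set))"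
  by (rule finite_subset[OF _ finite_vecs]) (auto simp: dual_def)

lemma card_dual:
  fixes H :: "(nat \<Rightarrow> 'a::{field,finite}) list"
  shows "CARD('a) ^ n \<le> CARD('a) ^ length H * card (dual n (set H))"
proof (induction H)
  case Nil
  have "dual n (set []) = (vecs n :: (nat \<Rightarrow> 'a) set)" by (simp add: dual_def)
  then show ?case by (simp add: card_vecs)
next
  case (Cons h H)
  have "card (dual n (set H)) \<le> CARD('a) * card {x \<in> dual n (set H). dotp n x h = 0}"
    by (rule card_le_split[OF lin_dual finite_dual])
  then have "card (dual n (set H)) \<le> CARD('a) * card (dual n (set (h # H)))"
    by (metis dual_cons)
  then have "CARD('a) ^ length H * card (dual n (set H)) \<le> CARD('a) ^ length (h # H) * card (dual n (set (h # H)))"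
    by (simp add: mult.assoc)
  then show ?case using Cons by linarith
qed

lemma set_sub_row_span: "set H \<subseteq> row_span H"
proof
  fix h assume "h \<in> set H"
  then obtain j where j: "j < length H" "H ! j = h" by (auto simp: in_set_conv_nth)
  have "h = (\<lambda>i. \<Sum>j'<length H. (if j' = j then 1 else 0) * (H ! j') i)"
  proof
    fix i
    have "(\<Sum>j'<length H. (if j' = j then 1 else 0) * (H ! j') i) = (\<Sum>j'<length H. if j' = j then (H ! j) i else 0)"
      by (rule sum.cong) auto
    also have "\<dots> = h i" using j by (simp add: sum.delta')
    finally show "h i = (\<Sum>j'<length H. (if j' = j then 1 else 0) * (H ! j') i)" by simp
  qed
  then show "h \<in> row_span H" unfolding row_span_def
    by (intro CollectI exI[of _ "\<lambda>j'. if j' = j then 1 else 0"]) simp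
qed

lemma dual_row_span: "dual n (row_span H) = dual n (set H)"
proof
  show "dual n (row_span H) \<subseteq> dual n (set H)"
    using set_sub_row_span[of H] by (auto simp: dual_def)
next
  show "dual n (set H) \<subseteq> dual n (row_span H)"
  proof
    fix y assume y: "y \<in> dual n (set H)"
    have "dotp n y v = 0" if "v \<in> row_span H" for v
    proof -
      obtain c where v: "v = (\<lambda>i. \<Sum>j<length H. c j * (H ! j) i)" using \<open>v \<in> row_span H\<close> by (auto simp: row_span_def)
      have "dotp n y v = (\<Sum>i<n. \<Sum>j<length H. y i * (c j * (H ! j) i))"
        unfolding v dotp_def by (simp only: sum_distrib_left)
      also have "\<dots> = (\<Sum>i<n. \<Sum>j<length H. c j * (y i * (H ! j) i))"
        by (intro sum.cong refl) (rule mult.left_commute)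
      also have "\<dots> = (\<Sum>j<length H. \<Sum>i<n. c j * (y i * (H ! j) i))" by (rule sum.swap)
      also have "\<dots> = (\<Sum>j<length H. c j * dotp n y (H ! j))" by (simp only: dotp_def sum_distrib_left)
      also have "\<dots> = 0"
      proof (rule sum.neutral, rule ballI)
        fix j assume "j \<in> {..<length H}"
        then have "H ! j \<in> set H" by simp
        then have "dotp n y (H ! j) = 0" using y by (simp add: dual_def)
        then show "c j * dotp n y (H ! j) = 0" by simp
      qed
      finally show ?thesis .
    qed
    then show "y \<in> dual n (row_span H)" using y by (auto simp: dual_def)
  qed
qed

lemma row_span_image: "row_span H = (\<lambda>c i. \<Sum>j<length H. c j * (H ! j) i) ` vecs (length H)"
proof
  show "row_span H \<subseteq> (\<lambda>c i. \<Sum>j<length H. c j * (H ! j) i) ` vecs (length H)"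
  proof
    fix v assume "v \<in> row_span H"
    then obtain c where v: "v = (\<lambda>i. \<Sum>j<length H. c j * (H ! j) i)" by (auto simp: row_span_def)
    let ?c = "\<lambda>j. if j < length H then c j else 0"
    have "?c \<in> vecs (length H)" by (simp add: vecs_def)
    moreover have "v = (\<lambda>i. \<Sum>j<length H. ?c j * (H ! j) i)" unfolding v by simp
    ultimately show "v \<in> (\<lambda>c i. \<Sum>j<length H. c j * (H ! j) i) ` vecs (length H)"
      by (intro image_eqI[where x="?c"]) simp_all
  qed
qed (auto simp: row_span_def)

lemma finite_row_span: "finite (row_span (H :: (nat \<Rightarrow> 'a::{comm_ring_1,finite}) list))"
  unfolding row_span_image by (simp add: finite_vecs)

lemma card_row_span: "card (row_span (H :: (nat \<Rightarrow> 'a::{comm_ring_1,finite}) list)) \<le> CARD('a) ^ length H"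
proof -
  have "card ((\<lambda>c i. \<Sum>j<length H. c j * (H ! j) i) ` vecs (length H)) \<le> card (vecs (length H) :: (nat \<Rightarrow> 'a) set)"
    by (rule card_image_le[OF finite_vecs])
  then show ?thesis unfolding row_span_image card_vecs .
qed



lemma nonempty_step:
  fixes hx hz :: "(nat \<Rightarrow> 'a::{field,finite}) list"
  assumes "length hx + length hz < n"
  shows "dual n (row_span hz) - row_span hx \<noteq> {}"
proof
  assume e: "dual n (row_span hz) - row_span hx = {}"
  let ?Q = "CARD('a)"
  have Q: "?Q \<ge> 2" by (rule card_field_ge2)
  have A: "?Q ^ n \<le> ?Q ^ length hz * card (dual n (row_span hz))"
    using card_dual[of n hz] by (simp add: dual_row_span)
  have R: "card (row_span hx) \<le> ?Q ^ length hx" by (rule card_row_span)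
  have "card (dual n (row_span hz)) \<le> card (row_span hx)"
    using e by (intro card_mono[OF finite_row_span]) auto
  then have "?Q ^ n \<le> ?Q ^ length hz * ?Q ^ length hx"
    using A R by (meson le_trans mult_le_mono2)
  also have "\<dots> = ?Q ^ (length hx + length hz)" by (simp add: power_add mult.commute)
  also have "\<dots> < ?Q ^ n" using Q assms by (intro power_strict_increasing) auto
  finally show False by simp
qed

lemma step_prob:
  fixes hx hz :: "(nat \<Rightarrow> 'a::{field,finite}) list"
  assumes a: "a \<in> dual n (row_span hz)" "dotp n y a \<noteq> 0" and len: "length hx + length hz < n"
  shows "measure_pmf.prob (pmf_of_set (dual n (row_span hz) - row_span hx)) {v. dotp n y v = 0}
           \<le> 1 / real CARD('a)"
proof -
  let ?Q = "CARD('a)"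
  define A where "A = dual n (row_span hz)"
  define R where "R = row_span hx"
  define K where "K = {x\<in>A. dotp n x y = 0}"
  have Q: "?Q \<ge> 2" by (rule card_field_ge2)
  have fA: "finite A" unfolding A_def by (rule finite_dual)
  have fR: "finite R" unfolding R_def by (rule finite_row_span)
  have linA: "lin A" unfolding A_def by (rule lin_dual)
  have linAR: "lin (A \<inter> R)" unfolding A_def R_def by (intro lin_Int lin_dual lin_row_span)
  have ne: "A - R \<noteq> {}" unfolding A_def R_def by (rule nonempty_step[OF len])
  let ?a = "\<lambda>i. inverse (dotp n a y) * a i"
  have "?a \<in> A" using linA a unfolding lin_def A_def by blast
  moreover have "dotp n ?a y = 1" using a by (simp add: dotp_smult dotp_comm[of n a y])
  ultimately have cA: "card A = ?Q * card K" unfolding K_def by (rule card_split[OF linA fA])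
  have "card (A \<inter> R) \<le> ?Q * card {x\<in>A \<inter> R. dotp n x y = 0}"
    by (rule card_le_split[OF linAR]) (use fA in auto)
  also have "{x\<in>A \<inter> R. dotp n x y = 0} = K \<inter> R" unfolding K_def by auto
  finally have cAR: "card (A \<inter> R) \<le> ?Q * card (K \<inter> R)" .
  have c1: "card (A - R) = card A - card (A \<inter> R)" using fA by (simp add: card_Diff_subset_Int)
  have fK: "finite K" using fA unfolding K_def by simp
  have c2: "card (K - R) = card K - card (K \<inter> R)" using fK by (simp add: card_Diff_subset_Int)
  have KR: "card (K \<inter> R) \<le> card K" using fK by (simp add: card_mono)
  have "?Q * card (K - R) = ?Q * card K - ?Q * card (K \<inter> R)" by (simp add: c2 diff_mult_distrib2)
  also have "\<dots> \<le> card (A - R)" using c1 cA cAR by linarith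
  finally have main: "?Q * card (K - R) \<le> card (A - R)" .
  have pos: "card (A - R) > 0" using ne fA by (simp add: card_gt_0_iff)
  have eq: "(A - R) \<inter> {v. dotp n y v = 0} = K - R" unfolding K_def by (auto simp: dotp_comm)
  have "measure_pmf.prob (pmf_of_set (A - R)) {v. dotp n y v = 0} = real (card (K - R)) / real (card (A - R))"
    using ne fA by (simp add: measure_pmf_of_set eq)
  also have "\<dots> \<le> 1 / real ?Q"
  proof -
    have "real ?Q * real (card (K - R)) \<le> real (card (A - R))" using main by (metis of_nat_le_iff of_nat_mult)
    then show ?thesis using pos Q by (simp add: divide_simps mult.commute)
  qed
  finally show ?thesis unfolding A_def R_def .
qed

lemma iter_back:
  assumes "\<And>a b. b \<in> set_pmf (f a) \<Longrightarrow> b \<in> B \<Longrightarrow> a \<in> B"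
  shows "s' \<in> set_pmf (iter_pmf k f s) \<Longrightarrow> s' \<in> B \<Longrightarrow> s \<in> B"
proof (induction k arbitrary: s)
  case 0 then show ?case by simp
next
  case (Suc k)
  then obtain x where "x \<in> set_pmf (f s)" "s' \<in> set_pmf (iter_pmf k f x)" by auto
  then show ?case using Suc assms by blast
qed

lemma iter_bound:
  assumes inv: "\<And>k s s'. I (Suc k) s \<Longrightarrow> s' \<in> set_pmf (f s) \<Longrightarrow> I k s'"
    and bnd: "\<And>k s. I (Suc k) s \<Longrightarrow> measure_pmf.prob (f s) B \<le> c"
    and bck: "\<And>s s'. s' \<in> set_pmf (f s) \<Longrightarrow> s' \<in> B \<Longrightarrow> s \<in> B"
    and c: "c \<ge> 0"
  shows "I k s \<Longrightarrow> measure_pmf.prob (iter_pmf k f s) B \<le> c ^ k"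
proof (induction k arbitrary: s)
  case 0 then show ?case by simp
next
  case (Suc k)
  have "measure_pmf.prob (bind_pmf (f s) (iter_pmf k f)) B \<le> c ^ k * measure_pmf.prob (f s) B"
  proof (rule prob_bind_le_ind)
    fix x assume x: "x \<in> set_pmf (f s)"
    show "measure_pmf.prob (iter_pmf k f x) B \<le> c ^ k * indicator B x"
    proof (cases "x \<in> B")
      case True
      then show ?thesis using Suc.IH[OF inv[OF Suc.prems x]] by simp
    next
      case False
      have "z \<notin> B" if z: "z \<in> set_pmf (iter_pmf k f x)" for z
      proof
        assume "z \<in> B"
        have "x \<in> B" by (rule iter_back[where f=f and B=B]) (use bck z \<open>z \<in> B\<close> in blast)+
        then show False using False by simp
      qed
      then have "set_pmf (iter_pmf k f x) \<inter> B = {}" by blast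
      then have "measure_pmf.prob (iter_pmf k f x) B = 0" by (simp add: measure_pmf_zero_iff)
      then show ?thesis using False by simp
    qed
  qed (use c in simp)
  also have "\<dots> \<le> c ^ k * c" using bnd[OF Suc.prems] c by (simp add: mult_left_mono)
  finally show ?case by (simp add: mult.commute)
qed

lemma set_stepX: "set_pmf (stepX n s) \<subseteq> {(fst s @ [v], snd s) | v. True}"
  by (cases s) (auto simp: stepX_def)

lemma set_stepZ: "set_pmf (stepZ n s) \<subseteq> {(fst s, snd s @ [v]) | v. True}"
  by (cases s) (auto simp: stepZ_def)

lemma iterX_struct:
  "s' \<in> set_pmf (iter_pmf k (stepX n) s) \<Longrightarrow> length (fst s') = length (fst s) + k \<and> snd s' = snd s"
proof (induction k arbitrary: s)
  case 0 then show ?case by simp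
next
  case (Suc k)
  then obtain x where x: "x \<in> set_pmf (stepX n s)" "s' \<in> set_pmf (iter_pmf k (stepX n) x)" by auto
  obtain v where v: "x = (fst s @ [v], snd s)" using x(1) set_stepX[of n s] by blast
  then show ?case using Suc.IH[OF x(2)] by auto
qed

lemma iterZ_struct:
  "s' \<in> set_pmf (iter_pmf k (stepZ n) s) \<Longrightarrow>
     fst s' = fst s \<and> length (snd s') = length (snd s) + k \<and> set (snd s) \<subseteq> set (snd s')"
proof (induction k arbitrary: s)
  case 0 then show ?case by simp
next
  case (Suc k)
  then obtain x where x: "x \<in> set_pmf (stepZ n s)" "s' \<in> set_pmf (iter_pmf k (stepZ n) x)" by auto
  obtain v where v: "x = (fst s, snd s @ [v])" using x(1) set_stepZ[of n s] by blast
  then show ?case using Suc.IH[OF x(2)] by auto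
qed

definition BX :: "nat \<Rightarrow> (nat \<Rightarrow> 'a::comm_ring_1) \<Rightarrow> ((nat \<Rightarrow> 'a) list \<times> (nat \<Rightarrow> 'a) list) set" where
  "BX n y = {s. \<forall>v\<in>set (fst s). dotp n y v = 0}"
definition BZ :: "nat \<Rightarrow> (nat \<Rightarrow> 'a::comm_ring_1) \<Rightarrow> ((nat \<Rightarrow> 'a) list \<times> (nat \<Rightarrow> 'a) list) set" where
  "BZ n y = {s. \<forall>v\<in>set (snd s). dotp n y v = 0}"

lemma phaseX_bound:
  fixes y :: "nat \<Rightarrow> 'a::{field,finite}"
  assumes "\<exists>a\<in>dual n (row_span (snd s)). dotp n y a \<noteq> 0" "length (fst s) + length (snd s) + k \<le> n"
  shows "measure_pmf.prob (iter_pmf k (stepX n) s) (BX n y) \<le> (1 / real CARD('a)) ^ k"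
proof -
  let ?I = "\<lambda>k s. (\<exists>a\<in>dual n (row_span (snd s)). dotp n y a \<noteq> 0) \<and> length (fst s) + length (snd s) + k \<le> n"
  show ?thesis
  proof (rule iter_bound[where I = ?I])
    fix k s s' assume "?I (Suc k) s" "s' \<in> set_pmf (stepX n s)"
    moreover obtain v where "s' = (fst s @ [v], snd s)" using \<open>s' \<in> set_pmf (stepX n s)\<close> set_stepX[of n s] by blast
    ultimately show "?I k s'" by auto
  next
    fix k and s :: "(nat \<Rightarrow> 'a) list \<times> (nat \<Rightarrow> 'a) list" assume I: "?I (Suc k) s"
    obtain hx hz where s: "s = (hx, hz)" by (cases s)
    obtain a where a: "a \<in> dual n (row_span hz)" "dotp n y a \<noteq> 0" using I s by auto
    have len: "length hx + length hz < n" using I s by auto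
    have "measure_pmf.prob (stepX n s) (BX n y)
        = measure_pmf.prob (pmf_of_set (dual n (row_span hz) - row_span hx)) ((\<lambda>v. (hx @ [v], hz)) -` BX n y)"
      by (simp add: s stepX_def)
    also have "\<dots> \<le> measure_pmf.prob (pmf_of_set (dual n (row_span hz) - row_span hx)) {v. dotp n y v = 0}"
      by (rule measure_pmf.finite_measure_mono) (auto simp: BX_def)
    also have "\<dots> \<le> 1 / real CARD('a)" by (rule step_prob[OF a len])
    finally show "measure_pmf.prob (stepX n s) (BX n y) \<le> 1 / real CARD('a)" .
  next
    fix s s' assume "s' \<in> set_pmf (stepX n s)" "s' \<in> BX n y"
    then show "s \<in> BX n y" using set_stepX[of n s] by (auto simp: BX_def)
  qed (use assms in auto)
qed

lemma phaseZ_bound: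
  fixes y :: "nat \<Rightarrow> 'a::{field,finite}"
  assumes "\<exists>a\<in>dual n (row_span (fst s)). dotp n y a \<noteq> 0" "length (fst s) + length (snd s) + k \<le> n"
  shows "measure_pmf.prob (iter_pmf k (stepZ n) s) (BZ n y) \<le> (1 / real CARD('a)) ^ k"
proof -
  let ?I = "\<lambda>k s. (\<exists>a\<in>dual n (row_span (fst s)). dotp n y a \<noteq> 0) \<and> length (fst s) + length (snd s) + k \<le> n"
  show ?thesis
  proof (rule iter_bound[where I = ?I])
    fix k s s' assume "?I (Suc k) s" "s' \<in> set_pmf (stepZ n s)"
    moreover obtain v where "s' = (fst s, snd s @ [v])" using \<open>s' \<in> set_pmf (stepZ n s)\<close> set_stepZ[of n s] by blast
    ultimately show "?I k s'" by auto
  next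
    fix k and s :: "(nat \<Rightarrow> 'a) list \<times> (nat \<Rightarrow> 'a) list" assume I: "?I (Suc k) s"
    obtain hx hz where s: "s = (hx, hz)" by (cases s)
    obtain a where a: "a \<in> dual n (row_span hx)" "dotp n y a \<noteq> 0" using I s by auto
    have len: "length hz + length hx < n" using I s by auto
    have "measure_pmf.prob (stepZ n s) (BZ n y)
        = measure_pmf.prob (pmf_of_set (dual n (row_span hx) - row_span hz)) ((\<lambda>v. (hx, hz @ [v])) -` BZ n y)"
      by (simp add: s stepZ_def)
    also have "\<dots> \<le> measure_pmf.prob (pmf_of_set (dual n (row_span hx) - row_span hz)) {v. dotp n y v = 0}"
      by (rule measure_pmf.finite_measure_mono) (auto simp: BZ_def)
    also have "\<dots> \<le> 1 / real CARD('a)" by (rule step_prob[OF a len])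
    finally show "measure_pmf.prob (stepZ n s) (BZ n y) \<le> 1 / real CARD('a)" .
  next
    fix s s' assume "s' \<in> set_pmf (stepZ n s)" "s' \<in> BZ n y"
    then show "s \<in> BZ n y" using set_stepZ[of n s] by (auto simp: BZ_def)
  qed (use assms in auto)
qed



lemma prod_weight:
  fixes y :: "nat \<Rightarrow> 'a::zero" and a b :: real
  shows "(\<Prod>i<n. if y i = 0 then a else b) = a ^ (n - hweight n y) * b ^ hweight n y"
proof -
  have NZ: "{..<n} \<inter> - {i. y i = 0} = {i. i < n \<and> y i \<noteq> 0}" by auto
  have Z: "{..<n} \<inter> {i. y i = 0} = {..<n} - {i. i < n \<and> y i \<noteq> 0}" by auto
  have cZ: "card ({..<n} - {i. i < n \<and> y i \<noteq> 0}) = n - hweight n y"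
    unfolding hweight_def by (subst card_Diff_subset) auto
  show ?thesis
    by (simp add: prod.If_cases NZ Z cZ hweight_def)
qed

lemma entropy_count:
  fixes \<delta> :: real
  assumes dpos: "0 < \<delta>" and dle: "\<delta> \<le> 1 - 1 / real CARD('a::{field,finite})"
  shows "real (card {y :: nat \<Rightarrow> 'a. y \<in> vecs n \<and> y \<noteq> (\<lambda>_. 0) \<and> real (hweight n y) < \<delta> * real n})
           < real CARD('a) powr (Hq (real CARD('a)) \<delta> * real n)"
proof -
  define q where "q = real CARD('a)"
  have q2: "q \<ge> 2" unfolding q_def using card_field_ge2[where 'a='a] by simp
  define a where "a = 1 - \<delta>"
  define b where "b = \<delta> / (q - 1)"
  have d1: "\<delta> < 1" using dle q2 unfolding q_def by (smt (verit) divide_pos_pos)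
  have apos: "a > 0" using d1 by (simp add: a_def)
  have bpos: "b > 0" using dpos q2 by (simp add: b_def)
  have ba: "b \<le> a"
  proof -
    have "\<delta> * q \<le> q - 1" using dle q2 unfolding q_def[symmetric] by (simp add: field_simps)
    then have "\<delta> \<le> (q - 1) * (1 - \<delta>)" by (simp add: algebra_simps)
    then show ?thesis using q2 by (simp add: a_def b_def divide_simps mult.commute)
  qed
  define g where "g = (\<lambda>x::'a. if x = 0 then a else b)"
  define p where "p = (\<lambda>y::nat \<Rightarrow> 'a. \<Prod>i<n. g (y i))"
  define Y where "Y = {y :: nat \<Rightarrow> 'a. y \<in> vecs n \<and> y \<noteq> (\<lambda>_. 0) \<and> real (hweight n y) < \<delta> * real n}"
  have sumg: "(\<Sum>x\<in>UNIV. g x) = 1"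
  proof -
    have "(\<Sum>x\<in>UNIV. g x) = g 0 + (\<Sum>x\<in>UNIV - {0}. g x)" by (rule sum.remove) auto
    also have "(\<Sum>x\<in>UNIV - {0}. g x) = (\<Sum>x\<in>UNIV - {0::'a}. b)" by (rule sum.cong) (auto simp: g_def)
    also have "g 0 = a" by (simp add: g_def)
    finally have "(\<Sum>x\<in>UNIV. g x) = a + (\<Sum>x\<in>UNIV - {0::'a}. b)" .
    moreover have "card (UNIV - {0::'a}) = CARD('a) - 1" by (simp add: card_Diff_subset)
    ultimately have "(\<Sum>x\<in>UNIV. g x) = a + real (CARD('a) - 1) * b" by simp
    also have "real (CARD('a) - 1) = q - 1" using q2 unfolding q_def by (simp add: of_nat_diff)
    finally show ?thesis using q2 by (simp add: a_def b_def)
  qed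
  have sum1: "(\<Sum>y\<in>vecs n. p y) = 1" unfolding p_def by (simp add: sum_vecs_prod sumg)
  have ppos: "p y > 0" for y unfolding p_def g_def using apos bpos by (intro prod_pos) auto
  have z: "(\<lambda>_. 0) \<in> (vecs n :: (nat \<Rightarrow> 'a) set)" by (simp add: vecs_def)
  have fV: "finite (vecs n :: (nat \<Rightarrow> 'a) set)" by (rule finite_vecs)
  have YV: "Y \<subseteq> vecs n - {\<lambda>_. 0}" unfolding Y_def by auto
  have fY: "finite Y" using YV fV by (meson finite_Diff finite_subset)
  have "(\<Sum>y\<in>Y. p y) \<le> (\<Sum>y\<in>vecs n - {\<lambda>_. 0}. p y)"
    using YV fV ppos by (intro sum_mono2) (auto simp: less_imp_le)
  also have "\<dots> = 1 - p (\<lambda>_. 0)" using sum1 z fV by (simp add: sum_diff1)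
  also have "\<dots> < 1" using ppos by simp
  finally have sY: "(\<Sum>y\<in>Y. p y) < 1" .
  have lnq: "ln q > 0" using q2 by simp
  have Hln: "Hq q \<delta> * ln q = \<delta> * ln (q - 1) - \<delta> * ln \<delta> - (1 - \<delta>) * ln (1 - \<delta>)"
    using lnq by (simp add: Hq_def log_def field_simps)
  have low: "q powr (- Hq q \<delta> * real n) \<le> p y" if y: "y \<in> Y" for y
  proof -
    define w where "w = hweight n y"
    have wn: "w \<le> n" unfolding w_def hweight_def
      by (rule order_trans[OF card_mono[of "{..<n}"]]) auto
    have wd: "real w < \<delta> * real n" using y unfolding Y_def w_def by simp
    have py: "p y = a ^ (n - w) * b ^ w" unfolding p_def g_def w_def by (rule prod_weight)
    have "ln (p y) = real (n - w) * ln a + real w * ln b"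
      using apos bpos by (simp add: py ln_mult ln_realpow)
    also have "\<dots> = real n * ln a + real w * (ln b - ln a)" using wn by (simp add: of_nat_diff algebra_simps)
    also have "\<dots> \<ge> real n * ln a + (\<delta> * real n) * (ln b - ln a)"
    proof -
      have "ln b - ln a \<le> 0" using ba apos bpos by simp
      then show ?thesis using wd by (intro add_left_mono mult_right_mono_neg) auto
    qed
    finally have "ln (p y) \<ge> real n * ((1 - \<delta>) * ln a + \<delta> * ln b)" by (simp add: algebra_simps)
    moreover have "ln b = ln \<delta> - ln (q - 1)" using dpos q2 by (simp add: b_def ln_div)
    ultimately have "ln (p y) \<ge> - (Hq q \<delta> * ln q) * real n" unfolding Hln a_def by (simp add: algebra_simps)
    moreover have "ln (q powr (- Hq q \<delta> * real n)) = - (Hq q \<delta> * ln q) * real n"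
      using q2 by (simp add: ln_powr)
    ultimately have L: "ln (q powr (- Hq q \<delta> * real n)) \<le> ln (p y)" by (simp add: mult_ac)
    have pw: "q powr (- Hq q \<delta> * real n) > 0" using q2 by simp
    show ?thesis using ln_le_cancel_iff[OF pw ppos[of y]] L by blast
  qed
  have "real (card Y) * q powr (- Hq q \<delta> * real n) = (\<Sum>y\<in>Y. q powr (- Hq q \<delta> * real n))" by simp
  also have "\<dots> \<le> (\<Sum>y\<in>Y. p y)" by (rule sum_mono) (rule low)
  finally have "real (card Y) * q powr (- Hq q \<delta> * real n) < 1" using sY by simp
  then have "real (card Y) < 1 / q powr (- Hq q \<delta> * real n)" using q2 by (simp add: divide_simps)
  also have "\<dots> = q powr (Hq q \<delta> * real n)" using q2 by (simp add: powr_minus divide_simps)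
  finally show ?thesis unfolding Y_def q_def .
qed

lemma ln_half_inv: "(t::real) > 0 \<Longrightarrow> ln (1 / (2 * t)) = - ln 2 - ln t"
  by (simp add: ln_div ln_mult)

lemma Hq_le:
  fixes q \<delta> \<epsilon> :: real
  assumes q2: "q \<ge> 2" and dpos: "0 < \<delta>" and d1: "\<delta> < 1" and eps: "0 < \<epsilon>"
    and qb: "q \<ge> 2 powr (2 / \<epsilon>)"
  shows "Hq q \<delta> \<le> \<delta> + \<epsilon> / 2"
proof -
  have lnq: "ln q > 0" using q2 by simp
  have h1: "ln (1 / (2 * \<delta>)) \<le> 1 / (2 * \<delta>) - 1" using dpos by (intro ln_le_minus_one) simp
  have h2: "ln (1 / (2 * (1 - \<delta>))) \<le> 1 / (2 * (1 - \<delta>)) - 1" using d1 by (intro ln_le_minus_one) simp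
  have e1: "ln (1 / (2 * \<delta>)) = - ln 2 - ln \<delta>" using dpos by (rule ln_half_inv)
  have e2: "ln (1 / (2 * (1 - \<delta>))) = - ln 2 - ln (1 - \<delta>)" using d1 by (intro ln_half_inv) simp
  have "\<delta> * (- ln 2 - ln \<delta>) \<le> \<delta> * (1 / (2 * \<delta>) - 1)" using h1 e1 dpos by (intro mult_left_mono) auto
  moreover have "(1 - \<delta>) * (- ln 2 - ln (1 - \<delta>)) \<le> (1 - \<delta>) * (1 / (2 * (1 - \<delta>)) - 1)"
    using h2 e2 d1 by (intro mult_left_mono) auto
  moreover have "\<delta> * (1 / (2 * \<delta>) - 1) = 1 / 2 - \<delta>" using dpos by (simp add: field_simps)
  moreover have "(1 - \<delta>) * (1 / (2 * (1 - \<delta>)) - 1) = \<delta> - 1 / 2" using d1 by (simp add: field_simps)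
  ultimately have "\<delta> * (- ln 2 - ln \<delta>) + (1 - \<delta>) * (- ln 2 - ln (1 - \<delta>)) \<le> 0" by linarith
  moreover have "\<delta> * (- ln 2 - ln \<delta>) + (1 - \<delta>) * (- ln 2 - ln (1 - \<delta>))
      = - \<delta> * ln \<delta> - (1 - \<delta>) * ln (1 - \<delta>) - ln 2" by (simp add: algebra_simps)
  ultimately have ent: "- \<delta> * ln \<delta> - (1 - \<delta>) * ln (1 - \<delta>) \<le> ln 2" by linarith
  have "ln (2 powr (2 / \<epsilon>)) \<le> ln q" using qb q2 by (subst ln_le_cancel_iff) auto
  then have "(2 / \<epsilon>) * ln 2 \<le> ln q" by (simp add: ln_powr)
  then have l2: "ln 2 \<le> \<epsilon> / 2 * ln q" using eps by (simp add: field_simps)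
  have lq1: "ln (q - 1) \<le> ln q" using q2 by simp
  have "Hq q \<delta> * ln q = \<delta> * ln (q - 1) - \<delta> * ln \<delta> - (1 - \<delta>) * ln (1 - \<delta>)"
    using lnq by (simp add: Hq_def log_def field_simps)
  also have "\<dots> \<le> \<delta> * ln q + ln 2" using ent lq1 dpos mult_left_mono[OF lq1, of \<delta>] by linarith
  also have "\<dots> \<le> (\<delta> + \<epsilon> / 2) * ln q" using l2 by (simp add: algebra_simps)
  finally show ?thesis using lnq by simp
qed



lemma len_HX0: "length (HX0 n r) = n div r" by (simp add: HX0_def)
lemma len_HZ0: "length (HZ0 n r) = n div r" by (simp add: HZ0_def)

lemma zero_in_dual: "(\<lambda>_. 0) \<in> dual n S"
  by (simp add: dual_def vecs_def dotp_zero)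

lemma kerm_vecs: "kerm n H \<subseteq> vecs n"
  by (auto simp: kerm_def dual_def)

lemma probEX:
  fixes y :: "nat \<Rightarrow> 'a::{field,finite}"
  assumes y: "y \<in> vecs n" and len: "2 * (n div r) + l \<le> n"
  shows "measure_pmf.prob (random_qLRC n r l :: ((nat \<Rightarrow> 'a) list \<times> (nat \<Rightarrow> 'a) list) pmf)
           {(hx, hz). y \<in> kerm n hx \<and> y \<notin> dual n (kerm n hz)} \<le> (1 / real CARD('a)) ^ l"
proof -
  let ?E = "{(hx, hz). y \<in> kerm n hx \<and> y \<notin> dual n (kerm n hz)}"
  let ?p1 = "iter_pmf l (stepX n) (HX0 n r, HZ0 n r :: (nat \<Rightarrow> 'a) list)"
  show ?thesis
  proof (cases "\<exists>a\<in>dual n (row_span (HZ0 n r :: (nat \<Rightarrow> 'a) list)). dotp n y a \<noteq> 0")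
    case True
    have "measure_pmf.prob (random_qLRC n r l) ?E \<le> measure_pmf.prob (random_qLRC n r l) (BX n y)"
      by (rule measure_pmf.finite_measure_mono) (auto simp: BX_def kerm_def dual_def)
    also have "\<dots> \<le> 1 * measure_pmf.prob ?p1 (BX n y)"
      unfolding random_qLRC_def
    proof (rule prob_bind_le_ind)
      fix s1 assume s1: "s1 \<in> set_pmf ?p1"
      show "measure_pmf.prob (iter_pmf l (stepZ n) s1) (BX n y) \<le> 1 * indicator (BX n y) s1"
      proof (cases "s1 \<in> BX n y")
        case True
        then show ?thesis by simp
      next
        case False
        have "set_pmf (iter_pmf l (stepZ n) s1) \<inter> BX n y = {}"
          using iterZ_struct[of _ l n s1] False by (auto simp: BX_def)
        then have "measure_pmf.prob (iter_pmf l (stepZ n) s1) (BX n y) = 0" by (simp add: measure_pmf_zero_iff)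
        then show ?thesis by simp
      qed
    qed simp
    also have "measure_pmf.prob ?p1 (BX n y) \<le> (1 / real CARD('a)) ^ l"
      by (rule phaseX_bound) (use True len in \<open>auto simp: len_HX0 len_HZ0\<close>)
    finally show ?thesis by simp
  next
    case False
    have "set_pmf (random_qLRC n r l) \<inter> ?E = {}"
    proof (rule ccontr)
      assume "set_pmf (random_qLRC n r l) \<inter> ?E \<noteq> {}"
      then obtain s where s: "s \<in> set_pmf (random_qLRC n r l)" "s \<in> ?E" by blast
      then obtain s1 where s1: "s1 \<in> set_pmf ?p1" "s \<in> set_pmf (iter_pmf l (stepZ n) s1)"
        unfolding random_qLRC_def by auto
      have "snd s1 = HZ0 n r" using iterX_struct[OF s1(1)] by simp
      then have sub: "set (HZ0 n r) \<subseteq> set (snd s)" using iterZ_struct[OF s1(2)] by simp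
      obtain hx hz where hs: "s = (hx, hz)" by (cases s)
      have "y \<in> dual n (kerm n hz)"
        unfolding dual_def
      proof (intro CollectI conjI ballI)
        show "y \<in> vecs n" by (rule y)
      next
        fix c assume c: "c \<in> kerm n hz"
        then have "c \<in> dual n (set (HZ0 n r))" using sub hs by (auto simp: kerm_def dual_def)
        then have "c \<in> dual n (row_span (HZ0 n r))" by (simp add: dual_row_span)
        then show "dotp n y c = 0" using False by blast
      qed
      then show False using s(2) hs by simp
    qed
    then have "measure_pmf.prob (random_qLRC n r l) ?E = 0" by (simp add: measure_pmf_zero_iff)
    then show ?thesis by simp
  qed
qed

lemma probEZ:
  fixes y :: "nat \<Rightarrow> 'a::{field,finite}"
  assumes y: "y \<in> vecs n" and len: "2 * (n div r) + 2 * l \<le> n"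
  shows "measure_pmf.prob (random_qLRC n r l :: ((nat \<Rightarrow> 'a) list \<times> (nat \<Rightarrow> 'a) list) pmf)
           {(hx, hz). y \<in> kerm n hz \<and> y \<notin> dual n (kerm n hx)} \<le> (1 / real CARD('a)) ^ l"
proof -
  let ?E = "{(hx, hz). y \<in> kerm n hz \<and> y \<notin> dual n (kerm n hx)}"
  let ?p1 = "iter_pmf l (stepX n) (HX0 n r, HZ0 n r :: (nat \<Rightarrow> 'a) list)"
  show ?thesis
    unfolding random_qLRC_def
  proof (rule prob_bind_le)
    fix s1 assume s1: "s1 \<in> set_pmf ?p1"
    have st: "length (fst s1) = n div r + l" "snd s1 = HZ0 n r"
      using iterX_struct[OF s1] by (auto simp: len_HX0)
    show "measure_pmf.prob (iter_pmf l (stepZ n) s1) ?E \<le> (1 / real CARD('a)) ^ l"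
    proof (cases "\<exists>a\<in>dual n (row_span (fst s1)). dotp n y a \<noteq> 0")
      case True
      have "measure_pmf.prob (iter_pmf l (stepZ n) s1) ?E \<le> measure_pmf.prob (iter_pmf l (stepZ n) s1) (BZ n y)"
        by (rule measure_pmf.finite_measure_mono) (auto simp: BZ_def kerm_def dual_def)
      also have "\<dots> \<le> (1 / real CARD('a)) ^ l"
        by (rule phaseZ_bound) (use True len st in \<open>auto simp: len_HZ0\<close>)
      finally show ?thesis .
    next
      case False
      have "set_pmf (iter_pmf l (stepZ n) s1) \<inter> ?E = {}"
      proof (rule ccontr)
        assume "set_pmf (iter_pmf l (stepZ n) s1) \<inter> ?E \<noteq> {}"
        then obtain s where s: "s \<in> set_pmf (iter_pmf l (stepZ n) s1)" "s \<in> ?E" by blast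
        have fs: "fst s = fst s1" using iterZ_struct[OF s(1)] by simp
        obtain hx hz where hs: "s = (hx, hz)" by (cases s)
        have "y \<in> dual n (kerm n hx)"
          unfolding dual_def
        proof (intro CollectI conjI ballI)
          show "y \<in> vecs n" by (rule y)
        next
          fix c assume c: "c \<in> kerm n hx"
          then have "c \<in> dual n (row_span (fst s1))" using fs hs by (simp add: kerm_def dual_row_span)
          then show "dotp n y c = 0" using False by blast
        qed
        then show False using s(2) hs by simp
      qed
      then have "measure_pmf.prob (iter_pmf l (stepZ n) s1) ?E = 0" by (simp add: measure_pmf_zero_iff)
      then show ?thesis by simp
    qed
  qed simp
qed



lemma core:
  fixes n r l :: nat and \<delta> e :: real
  assumes r_pos: "0 < r" and r_dvd: "r dvd n"
    and l_bound: "real l < real n / 2 - real n / real r"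
    and delta_pos: "0 < \<delta>" and delta_le: "\<delta> \<le> 1 - 1 / real CARD('a::{field,finite})"
    and lb: "real l \<ge> (Hq (real CARD('a)) \<delta> + e) * real n"
  shows "measure_pmf.prob (random_qLRC n r l :: ((nat \<Rightarrow> 'a) list \<times> (nat \<Rightarrow> 'a) list) pmf)
                 {(hx, hz). ereal (\<delta> * real n) \<le> ereal_of_enat (css_distance n (kerm n hx) (kerm n hz))}
         > 1 - 2 * real CARD('a) powr (- e * real n)"
proof -
  define q where "q = real CARD('a)"
  have q2: "q \<ge> 2" unfolding q_def using card_field_ge2[where 'a='a] by simp
  define M where "M = (random_qLRC n r l :: ((nat \<Rightarrow> 'a) list \<times> (nat \<Rightarrow> 'a) list) pmf)"
  define G :: "((nat \<Rightarrow> 'a) list \<times> (nat \<Rightarrow> 'a) list) set" where "G = {(hx, hz). ereal (\<delta> * real n) \<le> ereal_of_enat (css_distance n (kerm n hx) (kerm n hz))}"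
  define Y where "Y = {y :: nat \<Rightarrow> 'a. y \<in> vecs n \<and> y \<noteq> (\<lambda>_. 0) \<and> real (hweight n y) < \<delta> * real n}"
  define EXs where "EXs = (\<lambda>y::nat \<Rightarrow> 'a. {(hx, hz). y \<in> kerm n hx \<and> y \<notin> dual n (kerm n hz)})"
  define EZs where "EZs = (\<lambda>y::nat \<Rightarrow> 'a. {(hx, hz). y \<in> kerm n hz \<and> y \<notin> dual n (kerm n hx)})"
  define U where "U = (\<Union>y\<in>Y. EXs y \<union> EZs y)"
  have dv: "real (n div r) = real n / real r" using r_dvd by (rule real_of_nat_div)
  have "real (2 * (n div r) + 2 * l) < real n" using l_bound dv by simp
  then have len: "2 * (n div r) + 2 * l < n" by linarith
  have fY: "finite Y"
    by (rule finite_subset[OF _ finite_vecs[where n=n]]) (auto simp: Y_def)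
  have cY: "real (card Y) < q powr (Hq q \<delta> * real n)"
    unfolding Y_def q_def by (rule entropy_count[OF delta_pos delta_le])
  have sub: "UNIV - U \<subseteq> G"
  proof
    fix s assume s: "s \<in> UNIV - U"
    obtain hx hz where hs: "s = (hx, hz)" by (cases s)
    define m where "m = nat \<lceil>\<delta> * real n\<rceil>"
    have wt: "m \<le> hweight n y"
      if y: "y \<in> (kerm n hz - dual n (kerm n hx)) \<union> (kerm n hx - dual n (kerm n hz))" for y
    proof -
      have yv: "y \<in> vecs n" using y kerm_vecs by blast
      have y0: "y \<noteq> (\<lambda>_. 0)" using y zero_in_dual by blast
      have "\<not> real (hweight n y) < \<delta> * real n"
      proof
        assume "real (hweight n y) < \<delta> * real n"
        then have "y \<in> Y" using yv y0 by (simp add: Y_def)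
        moreover have "s \<in> EXs y \<union> EZs y" using y hs by (auto simp: EXs_def EZs_def)
        ultimately show False using s by (auto simp: U_def)
      qed
      then have "\<delta> * real n \<le> real (hweight n y)" by simp
      then show ?thesis unfolding m_def by (simp add: nat_le_iff ceiling_le_iff)
    qed
    have "enat m \<le> css_distance n (kerm n hx) (kerm n hz)"
      unfolding css_distance_def by (rule INF_greatest) (use wt in simp)
    then have c1: "ereal_of_enat (enat m) \<le> ereal_of_enat (css_distance n (kerm n hx) (kerm n hz))"
      using ereal_of_enat_le_iff by blast
    have "\<delta> * real n \<le> real m" unfolding m_def by linarith
    then have c2: "ereal (\<delta> * real n) \<le> ereal_of_enat (enat m)" by simp
    have "ereal (\<delta> * real n) \<le> ereal_of_enat (css_distance n (kerm n hx) (kerm n hz))"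
      by (rule order_trans[OF c2 c1])
    then show "s \<in> G" using hs by (simp add: G_def)
  qed
  have "measure_pmf.prob M U \<le> (\<Sum>y\<in>Y. measure_pmf.prob M (EXs y \<union> EZs y))"
    unfolding U_def by (rule measure_pmf.finite_measure_subadditive_finite[OF fY]) simp
  also have "\<dots> \<le> (\<Sum>y\<in>Y. 2 * (1 / q) ^ l)"
  proof (rule sum_mono)
    fix y assume y: "y \<in> Y"
    have yv: "y \<in> vecs n" using y by (simp add: Y_def)
    have "measure_pmf.prob M (EXs y \<union> EZs y) \<le> measure_pmf.prob M (EXs y) + measure_pmf.prob M (EZs y)"
      by (rule measure_Un_le) simp_all
    also have "measure_pmf.prob M (EXs y) \<le> (1 / q) ^ l"
      unfolding M_def EXs_def q_def by (rule probEX[OF yv]) (use len in simp)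
    also have "measure_pmf.prob M (EZs y) \<le> (1 / q) ^ l"
      unfolding M_def EZs_def q_def by (rule probEZ[OF yv]) (use len in simp)
    finally show "measure_pmf.prob M (EXs y \<union> EZs y) \<le> 2 * (1 / q) ^ l" by simp
  qed
  also have "\<dots> = real (card Y) * (2 * (1 / q) ^ l)" by simp
  also have "\<dots> < q powr (Hq q \<delta> * real n) * (2 * (1 / q) ^ l)"
    using cY q2 by (intro mult_strict_right_mono) auto
  also have "\<dots> = 2 * q powr (Hq q \<delta> * real n - real l)"
  proof -
    have qp: "q powr real l = q ^ l" using q2 by (simp add: powr_realpow)
    show ?thesis using qp q2 by (simp add: powr_diff power_one_over field_simps)
  qed
  also have "\<dots> \<le> 2 * q powr (- e * real n)"
  proof -
    have "Hq q \<delta> * real n - real l \<le> - e * real n" using lb unfolding q_def by (simp add: algebra_simps)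
    then show ?thesis using q2 by (simp add: powr_mono)
  qed
  finally have pU: "measure_pmf.prob M U < 2 * q powr (- e * real n)" .
  have "measure_pmf.prob M (UNIV - U) = 1 - measure_pmf.prob M U"
    using measure_pmf.prob_compl[of U M] by simp
  moreover have "measure_pmf.prob M (UNIV - U) \<le> measure_pmf.prob M G"
    using sub by (rule measure_pmf.finite_measure_mono) simp
  ultimately have "measure_pmf.prob M G > 1 - 2 * q powr (- e * real n)" using pU by linarith
  then show ?thesis unfolding M_def G_def q_def .
qed

theorem proposition4p4:
  fixes n r l :: nat and \<delta> \<epsilon> :: real
  assumes r_pos: "0 < r" and r_dvd: "r dvd n"
    and l_bound: "real l < real n / 2 - real n / real r"
    and delta_pos: "0 < \<delta>" and delta_le: "\<delta> \<le> 1 - 1 / real CARD('a::{field,finite})"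
    and eps_pos: "0 < \<epsilon>"
  defines "q \<equiv> real CARD('a)"
  defines "P \<equiv> measure_pmf.prob (random_qLRC n r l :: ((nat \<Rightarrow> 'a) list \<times> (nat \<Rightarrow> 'a) list) pmf)
                 {(hx, hz). ereal (\<delta> * real n) \<le> ereal_of_enat (css_distance n (kerm n hx) (kerm n hz))}"
  shows "(real l \<ge> (Hq q \<delta> + \<epsilon>) * real n \<longrightarrow> P > 1 - 2 * q powr (- \<epsilon> * real n))
       \<and> (q \<ge> 2 powr (2 / \<epsilon>) \<and> real l \<ge> (\<delta> + \<epsilon>) * real n
            \<longrightarrow> P > 1 - 2 * q powr (- \<epsilon> * real n / 2))"
proof (intro conjI impI)
  assume "real l \<ge> (Hq q \<delta> + \<epsilon>) * real n"
  then show "P > 1 - 2 * q powr (- \<epsilon> * real n)"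
    unfolding P_def q_def by (intro core[OF r_pos r_dvd l_bound delta_pos delta_le]) (simp add: q_def)
next
  assume a: "q \<ge> 2 powr (2 / \<epsilon>) \<and> real l \<ge> (\<delta> + \<epsilon>) * real n"
  have q2: "q \<ge> 2" unfolding q_def using card_field_ge2[where 'a='a] by simp
  have d1: "\<delta> < 1" using delta_le q2 unfolding q_def[symmetric] by (smt (verit) divide_pos_pos)
  have "Hq q \<delta> \<le> \<delta> + \<epsilon> / 2" using Hq_le[OF q2 delta_pos d1 eps_pos] a by blast
  then have "(Hq q \<delta> + \<epsilon> / 2) * real n \<le> (\<delta> + \<epsilon>) * real n"
    by (intro mult_right_mono) auto
  then have "real l \<ge> (Hq q \<delta> + \<epsilon> / 2) * real n" using a by linarith
  then have "P > 1 - 2 * q powr (- (\<epsilon> / 2) * real n)"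
    unfolding P_def q_def by (intro core[OF r_pos r_dvd l_bound delta_pos delta_le]) (simp add: q_def)
  then show "P > 1 - 2 * q powr (- \<epsilon> * real n / 2)" by (simp add: mult.commute)
qed


end
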